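(* Let $K=2q$ with $q\ge 4$ and suppose $t=KM/N=3$. Then the D2D coded caching rate $R=N/M-1$ is achievable with subpacketization $$F=\frac{3K^2(K-2)}{8},$$ so that $F/F_{\rm JCM}=\frac{3}{4}\cdot\frac{K}{K-1}$.
   Context: D2D coded caching setting: there are $N\ge 1$ files $W_1,\dots,W_N$ and $K\ge 2$ users, each with a cache of size $M$ files, $0<M\le N$, and $t:=KM/N$ is assumed to be a positive integer. A D2D coded caching scheme with (uncoded placement and) subpacketization $F\in\mathbb{N}_+$ is defined as follows. Fix a packet size $b\ge 1$; each file is a sequence of $F$ packets $W_n=(W_n^{(1)},\dots,W_n^{(F)})$, $W_n^{(j)}\in\{0,1\}^b$. Placement: each user $k\in[K]$ stores the packets $\{W_n^{(j)}:(n,j)\in Z_k\}$ for a fixed index set $Z_k\subseteq[N]\times[F]$ with $|Z_k|\le MF$ (independent of demands and file contents). Delivery: for every demand vector $\mathbf d=(d_1,\dots,d_K)\in[N]^K$, each user $k$ broadcasts to all other users $\ell_k(\mathbf d)\in\mathbb{N}$ blocks in $\{0,1\}^b$, each a deterministic function of the packets stored by user $k$; it is required that for all file contents each user $k$ can recover all $F$ packets of $W_{d_k}$ from its stored packets and the blocks sent by the other users. The rate is $R=\max_{\mathbf d}\frac{1}{F}\sum_{k=1}^K\ell_k(\mathbf d)$ (transmitted bits normalized by the file size $Fb$). The rate $R$ is achievable with subpacketization $F$ if such a scheme with rate $R$ exists for every packet size $b\ge 1$. Define $F_{\rm JCM}:=t\binom{K}{t}$. *)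

theory Defs
  imports Complex_Main "HOL-Library.FuncSet"
begin

(* Conventions: files are indexed 0..N-1, packets 0..F-1, users 0..K-1.
   A file library is W :: nat \<times> nat \<Rightarrow> bool list, W (n,j) = packet j of file n. *)

definition demands :: "nat \<Rightarrow> nat \<Rightarrow> (nat \<Rightarrow> nat) set" where
  "demands N K = PiE {..<K} (\<lambda>_. {..<N})"

definition valid_library :: "nat \<Rightarrow> nat \<Rightarrow> nat \<Rightarrow> (nat \<times> nat \<Rightarrow> bool list) \<Rightarrow> bool" where
  "valid_library N F b W \<longleftrightarrow> (\<forall>n<N. \<forall>j<F. length (W (n, j)) = b)"

(* the content of a cache: the packets indexed by Z, everything else hidden *)
definition mask :: "(nat \<times> nat) set \<Rightarrow> (nat \<times> nat \<Rightarrow> bool list) \<Rightarrow> (nat \<times> nat \<Rightarrow> bool list)" where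
  "mask Z W = (\<lambda>p. if p \<in> Z then W p else [])"

(* A D2D coded caching scheme with uncoded placement, subpacketization F,
   packet size b and rate R. enc d k maps the cache content of user k to the
   list of l d k blocks broadcast by user k; dec d k maps the cache content of
   user k and the blocks sent by the other users to the packets of W_{d k}. *)
definition d2d_scheme :: "nat \<Rightarrow> nat \<Rightarrow> real \<Rightarrow> nat \<Rightarrow> nat \<Rightarrow> real \<Rightarrow> bool" where
  "d2d_scheme N K M F b R \<longleftrightarrow>
    (\<exists>(Z :: nat \<Rightarrow> (nat \<times> nat) set)
      (l :: (nat \<Rightarrow> nat) \<Rightarrow> nat \<Rightarrow> nat)
      (enc :: (nat \<Rightarrow> nat) \<Rightarrow> nat \<Rightarrow> (nat \<times> nat \<Rightarrow> bool list) \<Rightarrow> bool list list)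
      (dec :: (nat \<Rightarrow> nat) \<Rightarrow> nat \<Rightarrow> (nat \<times> nat \<Rightarrow> bool list) \<Rightarrow> (nat \<Rightarrow> bool list list) \<Rightarrow> nat \<Rightarrow> bool list).
      (\<forall>k<K. Z k \<subseteq> {..<N} \<times> {..<F} \<and> real (card (Z k)) \<le> M * real F) \<and>
      (\<forall>d \<in> demands N K. \<forall>W. valid_library N F b W \<longrightarrow>
         (\<forall>k<K. length (enc d k (mask (Z k) W)) = l d k \<and>
                (\<forall>x \<in> set (enc d k (mask (Z k) W)). length x = b)) \<and>
         (\<forall>k<K. \<forall>j<F.
            dec d k (mask (Z k) W)
               (\<lambda>i. if i < K \<and> i \<noteq> k then enc d i (mask (Z i) W) else [])
               j = W (d k, j))) \<and>
      R = Max ((\<lambda>d. real (\<Sum>k<K. l d k) / real F) ` demands N K))"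

definition d2d_achievable :: "nat \<Rightarrow> nat \<Rightarrow> real \<Rightarrow> nat \<Rightarrow> real \<Rightarrow> bool" where
  "d2d_achievable N K M F R \<longleftrightarrow> F \<ge> 1 \<and> (\<forall>b\<ge>1. d2d_scheme N K M F b R)"

definition F_JCM :: "nat \<Rightarrow> nat \<Rightarrow> nat" where
  "F_JCM K t = t * (K choose t)"

end

theory Submission
  imports Defs
begin


definition bxor :: "bool list \<Rightarrow> bool list \<Rightarrow> bool list" where
  "bxor a c = map2 (\<noteq>) a c"

lemma bxor_lcomm: "bxor a (bxor c e) = bxor c (bxor a e)"
  unfolding bxor_def by (rule nth_equalityI) auto

lemma length_bxor[simp]: "length (bxor a c) = min (length a) (length c)"
  unfolding bxor_def by simp

lemma bxor_cancel: "length a = length r \<Longrightarrow> bxor (bxor a r) r = a"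
  unfolding bxor_def by (rule nth_equalityI) auto

definition blk :: "nat \<Rightarrow> ('v \<Rightarrow> bool list) \<Rightarrow> 'v set \<Rightarrow> bool list" where
  "blk b f R = Finite_Set.fold (\<lambda>v acc. bxor (f v) acc) (replicate b False) R"

lemma cfc: "comp_fun_commute_on UNIV (\<lambda>v acc. bxor (f v) acc)"
  by unfold_locales (auto simp: fun_eq_iff bxor_lcomm)

lemma blk_insert: "finite R \<Longrightarrow> v \<notin> R \<Longrightarrow> blk b f (insert v R) = bxor (f v) (blk b f R)"
  unfolding blk_def by (simp add: comp_fun_commute_on.fold_insert[OF cfc])

lemma blk_rem: "finite R \<Longrightarrow> v \<in> R \<Longrightarrow> blk b f R = bxor (f v) (blk b f (R - {v}))"
  unfolding blk_def by (rule comp_fun_commute_on.fold_rec[OF cfc]) auto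

lemma blk_cong: "finite R \<Longrightarrow> (\<And>v. v \<in> R \<Longrightarrow> f v = g v) \<Longrightarrow> blk b f R = blk b g R"
proof (induction R rule: finite_induct)
  case empty then show ?case by (simp add: blk_def)
next
  case (insert x F) then show ?case by (simp add: blk_insert)
qed

lemma blk_length: "finite R \<Longrightarrow> (\<And>v. v \<in> R \<Longrightarrow> length (f v) = b) \<Longrightarrow> length (blk b f R) = b"
proof (induction R rule: finite_induct)
  case empty then show ?case by (simp add: blk_def)
next
  case (insert x F) then show ?case by (simp add: blk_insert)
qed


lemma abstract_scheme:
  fixes P :: "'p set" and cache :: "nat \<Rightarrow> 'p \<Rightarrow> bool" and Tx :: "nat \<Rightarrow> 't set"
    and rcv :: "'t \<Rightarrow> nat set" and pc :: "'t \<Rightarrow> nat \<Rightarrow> 'p"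
  assumes finP: "finite P" and cardP: "card P = F"
    and Nge: "N \<ge> 1"
    and finTx: "\<forall>s<K. finite (Tx s)"
    and tx_ok: "\<forall>s<K. \<forall>\<tau>\<in>Tx s. finite (rcv \<tau>) \<and> rcv \<tau> \<subseteq> {..<K} \<and>
                   (\<forall>v\<in>rcv \<tau>. pc \<tau> v \<in> P \<and> cache s (pc \<tau> v))"
    and cover: "\<forall>k<K. \<forall>p\<in>P. \<not> cache k p \<longrightarrow> (\<exists>s<K. s \<noteq> k \<and> (\<exists>\<tau>\<in>Tx s. k \<in> rcv \<tau> \<and>
                   pc \<tau> k = p \<and> (\<forall>v\<in>rcv \<tau> - {k}. cache k (pc \<tau> v))))"
    and mem: "\<forall>k<K. real N * real (card {p\<in>P. cache k p}) \<le> M * real F"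
    and rate: "real (\<Sum>s<K. card (Tx s)) = R * real F"
    and Fpos: "F > 0"
  shows "d2d_scheme N K M F b R"
proof -
  obtain \<phi> where phi: "bij_betw \<phi> {..<F} P"
    using ex_bij_betw_nat_finite[OF finP] cardP by (auto simp: atLeast0LessThan)
  define \<psi> where "\<psi> = the_inv_into {..<F} \<phi>"
  have psi1: "\<psi> p < F" "\<phi> (\<psi> p) = p" if "p \<in> P" for p
    using that phi unfolding \<psi>_def
    by (auto simp: bij_betw_def the_inv_into_f_f f_the_inv_into_f the_inv_into_into)
  have psi2: "\<psi> (\<phi> j) = j" if "j < F" for j
    using that phi unfolding \<psi>_def by (auto simp: bij_betw_def the_inv_into_f_f)
  have phiP: "\<phi> j \<in> P" if "j < F" for j using that phi by (auto simp: bij_betw_def)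
  define e where "e = (\<lambda>s. SOME h. bij_betw h {..<card (Tx s)} (Tx s))"
  have e: "bij_betw (e s) {..<card (Tx s)} (Tx s)" if "s < K" for s
  proof -
    have "\<exists>h. bij_betw h {..<card (Tx s)} (Tx s)"
      using ex_bij_betw_nat_finite[of "Tx s"] finTx that by (auto simp: atLeast0LessThan)
    then show ?thesis unfolding e_def by (rule someI_ex)
  qed
  define Z where "Z = (\<lambda>k. {..<N} \<times> {j. j < F \<and> cache k (\<phi> j)})"
  define l where "l = (\<lambda>(d::nat\<Rightarrow>nat) s. card (Tx s))"
  define enc where "enc = (\<lambda>(d::nat\<Rightarrow>nat) s (C::nat \<times> nat \<Rightarrow> bool list).
      map (\<lambda>i. blk b (\<lambda>v. C (d v, \<psi> (pc (e s i) v))) (rcv (e s i))) [0..<card (Tx s)])"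
  define good where "good = (\<lambda>k j (si :: nat \<times> nat). fst si < K \<and> fst si \<noteq> k \<and> snd si < card (Tx (fst si)) \<and>
       k \<in> rcv (e (fst si) (snd si)) \<and> pc (e (fst si) (snd si)) k = \<phi> j \<and>
       (\<forall>v\<in>rcv (e (fst si) (snd si)) - {k}. cache k (pc (e (fst si) (snd si)) v)))"
  define dec where "dec = (\<lambda>(d::nat\<Rightarrow>nat) k (C::nat \<times> nat \<Rightarrow> bool list) (rv :: nat \<Rightarrow> bool list list) j.
      if cache k (\<phi> j) then C (d k, j) else
        (let si = (SOME si. good k j si) in
          bxor (rv (fst si) ! snd si) (blk b (\<lambda>v. C (d v, \<psi> (pc (e (fst si) (snd si)) v)))
                     (rcv (e (fst si) (snd si)) - {k}))))"
  have Zsub: "Z k \<subseteq> {..<N} \<times> {..<F}" for k unfolding Z_def by auto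
  have cardZ: "real (card (Z k)) \<le> M * real F" if "k < K" for k
  proof -
    have "\<phi> ` {j. j < F \<and> cache k (\<phi> j)} = {p\<in>P. cache k p}"
      using phi psi1 by (auto simp: bij_betw_def image_iff)
    moreover have "inj_on \<phi> {j. j < F \<and> cache k (\<phi> j)}"
      using phi by (auto simp: bij_betw_def intro: inj_on_subset)
    ultimately have "card {j. j < F \<and> cache k (\<phi> j)} = card {p\<in>P. cache k p}"
      by (metis card_image)
    then have "card (Z k) = N * card {p\<in>P. cache k p}"
      unfolding Z_def by (simp add: card_cartesian_product)
    then show ?thesis using mem that by simp
  qed
  have dem_ne: "demands N K \<noteq> {}"
    unfolding demands_def using Nge by (auto simp: PiE_eq_empty_iff lessThan_empty_iff)
  have Rdef: "R = Max ((\<lambda>d. real (\<Sum>k<K. l d k) / real F) ` demands N K)"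
  proof -
    have "(\<lambda>d. real (\<Sum>k<K. l d k) / real F) ` demands N K = {real (\<Sum>s<K. card (Tx s)) / real F}"
      using dem_ne unfolding l_def by auto
    moreover have "real (\<Sum>s<K. card (Tx s)) / real F = R"
      using rate Fpos by (simp add: field_simps)
    ultimately show ?thesis by simp
  qed
  have inZ: "(d v, \<psi> p) \<in> Z k" if "d \<in> demands N K" "v < K" "p \<in> P" "cache k p" for d v p k
    using that psi1[of p] unfolding Z_def demands_def by (auto simp: PiE_iff)
  have lenW: "length (W (d v, \<psi> p)) = b" if "d \<in> demands N K" "v < K" "p \<in> P" "valid_library N F b W" for d v p W
    using that psi1[of p] unfolding valid_library_def demands_def by (auto simp: PiE_iff)
  have blkW: "blk b (\<lambda>v. mask (Z k) W (d v, \<psi> (pc \<tau> v))) A = blk b (\<lambda>v. W (d v, \<psi> (pc \<tau> v))) A"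
    if "d \<in> demands N K" "finite A" "A \<subseteq> {..<K}" "\<forall>v\<in>A. pc \<tau> v \<in> P \<and> cache k (pc \<tau> v)" for d k \<tau> A W
    by (rule blk_cong) (use that inZ in \<open>auto simp: mask_def\<close>)
  have main: "(\<forall>k<K. length (enc d k (mask (Z k) W)) = l d k \<and>
                (\<forall>x \<in> set (enc d k (mask (Z k) W)). length x = b)) \<and>
         (\<forall>k<K. \<forall>j<F.
            dec d k (mask (Z k) W)
               (\<lambda>i. if i < K \<and> i \<noteq> k then enc d i (mask (Z i) W) else [])
               j = W (d k, j))"
    if d: "d \<in> demands N K" and W: "valid_library N F b W" for d W
  proof (intro conjI allI impI)
    fix k assume k: "k < K"
    show "length (enc d k (mask (Z k) W)) = l d k" unfolding enc_def l_def by simp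
    show "\<forall>x \<in> set (enc d k (mask (Z k) W)). length x = b"
    proof
      fix x assume "x \<in> set (enc d k (mask (Z k) W))"
      then obtain i where i: "i < card (Tx k)" and x: "x = blk b (\<lambda>v. mask (Z k) W (d v, \<psi> (pc (e k i) v))) (rcv (e k i))"
        unfolding enc_def by auto
      have tau: "e k i \<in> Tx k" using e[OF k] i by (auto simp: bij_betw_def)
      have ok: "finite (rcv (e k i))" "rcv (e k i) \<subseteq> {..<K}" "\<forall>v\<in>rcv (e k i). pc (e k i) v \<in> P \<and> cache k (pc (e k i) v)"
        using tx_ok k tau by auto
      have "x = blk b (\<lambda>v. W (d v, \<psi> (pc (e k i) v))) (rcv (e k i))"
        unfolding x by (rule blkW[OF d ok])
      also have "length \<dots> = b"
        by (rule blk_length) (use ok lenW[OF d _ _ W] in auto)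
      finally show "length x = b" .
    qed
  next
    fix k j assume k: "k < K" and j: "j < F"
    show "dec d k (mask (Z k) W) (\<lambda>i. if i < K \<and> i \<noteq> k then enc d i (mask (Z i) W) else []) j = W (d k, j)"
    proof (cases "cache k (\<phi> j)")
      case True
      have "(d k, j) \<in> Z k" using inZ[OF d k phiP[OF j] True] psi2[OF j] by simp
      then show ?thesis using True unfolding dec_def by (simp add: mask_def)
    next
      case False
      obtain s \<tau> where s: "s < K" "s \<noteq> k" and tau: "\<tau> \<in> Tx s" "k \<in> rcv \<tau>" "pc \<tau> k = \<phi> j"
         "\<forall>v\<in>rcv \<tau> - {k}. cache k (pc \<tau> v)"
        using cover k phiP[OF j] False by blast
      obtain i where i: "i < card (Tx s)" "\<tau> = e s i" using e[OF s(1)] tau(1)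
        by (auto simp: bij_betw_def)
      have "good k j (s, i)" unfolding good_def using s tau i by auto
      then have g: "good k j (SOME si. good k j si)" by (rule someI)
      define s' where "s' = fst (SOME si. good k j si)"
      define i' where "i' = snd (SOME si. good k j si)"
      have g': "s' < K" "s' \<noteq> k" "i' < card (Tx s')" "k \<in> rcv (e s' i')" "pc (e s' i') k = \<phi> j"
        "\<forall>v\<in>rcv (e s' i') - {k}. cache k (pc (e s' i') v)"
        using g unfolding good_def s'_def i'_def by auto
      define t where "t = e s' i'"
      have tT: "t \<in> Tx s'" using e[OF g'(1)] g'(3) unfolding t_def by (auto simp: bij_betw_def)
      have ok: "finite (rcv t)" "rcv t \<subseteq> {..<K}" "\<forall>v\<in>rcv t. pc t v \<in> P \<and> cache s' (pc t v)"
        using tx_ok g'(1) tT by auto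
      define f where "f = (\<lambda>v. W (d v, \<psi> (pc t v)))"
      have flen: "length (f v) = b" if "v \<in> rcv t" for v
        unfolding f_def using lenW[OF d _ _ W] ok that by auto
      have recv: "enc d s' (mask (Z s') W) ! i' = blk b f (rcv t)"
        unfolding enc_def f_def t_def using g'(3) blkW[OF d ok[unfolded t_def]] by simp
      have split: "blk b f (rcv t) = bxor (f k) (blk b f (rcv t - {k}))"
        by (rule blk_rem) (use ok g'(4) t_def in auto)
      have rest: "blk b (\<lambda>v. mask (Z k) W (d v, \<psi> (pc t v))) (rcv t - {k}) = blk b f (rcv t - {k})"
        unfolding f_def by (rule blkW[OF d]) (use ok g'(6) t_def in auto)
      have fk: "f k = W (d k, j)" unfolding f_def t_def using g'(5) psi2[OF j] by simp
      have "dec d k (mask (Z k) W) (\<lambda>i. if i < K \<and> i \<noteq> k then enc d i (mask (Z i) W) else []) j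
          = bxor (enc d s' (mask (Z s') W) ! i') (blk b (\<lambda>v. mask (Z k) W (d v, \<psi> (pc t v))) (rcv t - {k}))"
        using False g'(1,2) unfolding dec_def s'_def i'_def t_def by (simp add: Let_def)
      also have "\<dots> = bxor (bxor (f k) (blk b f (rcv t - {k}))) (blk b f (rcv t - {k}))"
        using recv split rest by simp
      also have "\<dots> = f k"
      proof (rule bxor_cancel)
        have "length (blk b f (rcv t - {k})) = b"
          by (rule blk_length) (use flen ok in auto)
        then show "length (f k) = length (blk b f (rcv t - {k}))"
          using flen g'(4) t_def by simp
      qed
      finally show ?thesis using fk by simp
    qed
  qed
  show ?thesis
    unfolding d2d_scheme_def
    apply (rule exI[of _ Z], rule exI[of _ l], rule exI[of _ enc], rule exI[of _ dec])
    using Zsub cardZ main Rdef by blast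
qed



definition opp :: "nat \<Rightarrow> nat \<Rightarrow> nat \<Rightarrow> nat" where
  "opp q m i = (if m < q then q + i else i)"
definition idx :: "nat \<Rightarrow> nat \<Rightarrow> nat" where "idx q u = u mod q"
definition S2 :: "nat \<Rightarrow> nat set set" where "S2 q = {I. I \<subseteq> {..<q} \<and> card I = 2}"
definition S3 :: "nat \<Rightarrow> nat set set" where "S3 q = {I. I \<subseteq> {..<q} \<and> card I = 3}"
fun Tset :: "nat \<Rightarrow> nat \<times> nat set \<Rightarrow> nat set" where
  "Tset q (m, I) = insert m (opp q m ` I)"
definition PP :: "nat \<Rightarrow> ((nat \<times> nat set) \<times> nat) set" where
  "PP q = Sigma ({..<2*q} \<times> S2 q) (Tset q)"
definition cch :: "nat \<Rightarrow> nat \<Rightarrow> (nat \<times> nat set) \<times> nat \<Rightarrow> bool" where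
  "cch q k p = (k \<in> Tset q (fst p))"
definition Same :: "nat \<Rightarrow> nat \<Rightarrow> nat set" where
  "Same q s = {u. u < 2*q \<and> (u < q \<longleftrightarrow> s < q)}"
definition TI :: "nat \<Rightarrow> nat \<Rightarrow> (nat \<times> nat \<times> nat \<times> nat set) set" where
  "TI q s = (\<lambda>(a,J). (s, 0, a, J)) ` ((Same q s - {s}) \<times> S2 q)"
definition TII :: "nat \<Rightarrow> nat \<Rightarrow> (nat \<times> nat \<times> nat \<times> nat set) set" where
  "TII q s = (\<lambda>(C,c). (s, 1, c, C)) ` Sigma (S3 q) (\<lambda>C. C)"
definition Tx :: "nat \<Rightarrow> nat \<Rightarrow> (nat \<times> nat \<times> nat \<times> nat set) set" where
  "Tx q s = TI q s \<union> TII q s"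
fun rcv :: "nat \<Rightarrow> nat \<times> nat \<times> nat \<times> nat set \<Rightarrow> nat set" where
  "rcv q (s, tg, x, X) = (if tg = 0 then insert x (opp q s ` X) else opp q s ` X)"
fun pc :: "nat \<Rightarrow> nat \<times> nat \<times> nat \<times> nat set \<Rightarrow> nat \<Rightarrow> (nat \<times> nat set) \<times> nat" where
  "pc q (s, tg, x, X) v = (if tg = 0 then
      (if v = x then ((s, X), s) else ((opp q s (the_elem (X - {idx q v})), {idx q s, idx q x}), s))
    else ((s, X - {idx q v}), if x = idx q v then s else opp q s x))"

context fixes q :: nat assumes q2: "q \<ge> 2"
begin

lemma opp_lt: "i < q \<Longrightarrow> opp q m i < 2*q" unfolding opp_def by auto
lemma idx_opp[simp]: "i < q \<Longrightarrow> idx q (opp q m i) = i" unfolding opp_def idx_def by auto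
lemma side_opp: "i < q \<Longrightarrow> (opp q m i < q) \<longleftrightarrow> \<not> (m < q)" unfolding opp_def by auto
lemma opp_idx: "u < 2*q \<Longrightarrow> (u < q \<longleftrightarrow> \<not> m < q) \<Longrightarrow> opp q m (idx q u) = u"
  unfolding opp_def idx_def by (auto simp: le_mod_geq)
lemma opp_inj: "opp q m i = opp q m j \<Longrightarrow> i = j" unfolding opp_def by (auto split: if_splits)
lemma idx_lt: "idx q u < q" unfolding idx_def using q2 by auto
lemma idx_inj: "u < 2*q \<Longrightarrow> v < 2*q \<Longrightarrow> (u < q \<longleftrightarrow> v < q) \<Longrightarrow> idx q u = idx q v \<Longrightarrow> u = v"
  unfolding idx_def by (auto simp: le_mod_geq)
lemma opp_same: "(m < q \<longleftrightarrow> m' < q) \<Longrightarrow> opp q m = opp q m'" unfolding opp_def by auto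
lemma opp_back: "i < q \<Longrightarrow> m < 2*q \<Longrightarrow> opp q (opp q m i) (idx q m) = m"
  by (rule opp_idx) (auto simp: side_opp)

lemma card2E: "card J = 2 \<Longrightarrow> j \<in> J \<Longrightarrow> \<exists>j'. J = {j, j'} \<and> j \<noteq> j'"
  by (auto simp: card_2_iff) 

lemma S2_sub: "I \<in> S2 q \<Longrightarrow> i \<in> I \<Longrightarrow> i < q" unfolding S2_def by auto
lemma S3_sub: "I \<in> S3 q \<Longrightarrow> i \<in> I \<Longrightarrow> i < q" unfolding S3_def by auto

lemma tx_ok: "s < 2*q \<Longrightarrow> \<tau> \<in> Tx q s \<Longrightarrow> finite (rcv q \<tau>) \<and> rcv q \<tau> \<subseteq> {..<2*q} \<and>
   (\<forall>v\<in>rcv q \<tau>. pc q \<tau> v \<in> PP q \<and> cch q s (pc q \<tau> v))"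
proof -
  assume s: "s < 2*q" and t: "\<tau> \<in> Tx q s"
  show ?thesis
  proof (cases "\<tau> \<in> TI q s")
    case True
    then obtain a J where tau: "\<tau> = (s,0,a,J)" and a: "a < 2*q" "(a < q \<longleftrightarrow> s < q)" "a \<noteq> s"
      and J: "J \<subseteq> {..<q}" "card J = 2"
      unfolding TI_def Same_def S2_def by auto
    have finJ: "finite J" using J by (auto intro: finite_subset)
    have rc: "rcv q \<tau> = insert a (opp q s ` J)" using tau by simp
    have "pc q \<tau> v \<in> PP q \<and> cch q s (pc q \<tau> v)" if v: "v \<in> rcv q \<tau>" for v
    proof (cases "v = a")
      case True
      then show ?thesis using tau s J unfolding PP_def S2_def cch_def by auto
    next
      case False
      then obtain j where j: "j \<in> J" "v = opp q s j" using v rc by auto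
      have jq: "j < q" using j J by auto
      obtain j' where j': "J = {j, j'}" "j \<noteq> j'" using card2E[OF J(2) j(1)] by auto
      have j'q: "j' < q" using j' J by auto
      have the: "the_elem (J - {idx q v}) = j'" using j j' jq by auto
      have va: "v \<noteq> a" using False .
      have pcv: "pc q \<tau> v = ((opp q s j', {idx q s, idx q a}), s)" using tau va the by simp
      have ne: "idx q s \<noteq> idx q a" using idx_inj[OF s a(1)] a by metis
      have inS2: "{idx q s, idx q a} \<in> S2 q" using ne idx_lt unfolding S2_def by auto
      have sin: "s \<in> Tset q (opp q s j', {idx q s, idx q a})"
        using opp_back[OF j'q s] by auto
      show ?thesis using pcv inS2 sin opp_lt[OF j'q] unfolding PP_def cch_def by auto
    qed
    moreover have "finite (rcv q \<tau>)" using rc finJ by simp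
    moreover have "rcv q \<tau> \<subseteq> {..<2*q}" using rc a J opp_lt by auto
    ultimately show ?thesis by blast
  next
    case False
    then have "\<tau> \<in> TII q s" using t unfolding Tx_def by auto
    then obtain c C where tau: "\<tau> = (s,1,c,C)" and C: "C \<subseteq> {..<q}" "card C = 3" and c: "c \<in> C"
      unfolding TII_def S3_def by auto
    have finC: "finite C" using C by (auto intro: finite_subset)
    have rc: "rcv q \<tau> = opp q s ` C" using tau by simp
    have "pc q \<tau> v \<in> PP q \<and> cch q s (pc q \<tau> v)" if v: "v \<in> rcv q \<tau>" for v
    proof -
      obtain c0 where c0: "c0 \<in> C" "v = opp q s c0" using v rc by auto
      have c0q: "c0 < q" using c0 C by auto
      have pcv: "pc q \<tau> v = ((s, C - {c0}), if c = c0 then s else opp q s c)" using tau c0 c0q by simp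
      have "C - {c0} \<in> S2 q" using C c0 finC unfolding S2_def by auto
      moreover have "(if c = c0 then s else opp q s c) \<in> Tset q (s, C - {c0})" using c by auto
      ultimately show ?thesis using pcv s unfolding PP_def cch_def by auto
    qed
    moreover have "finite (rcv q \<tau>)" using rc finC by simp
    moreover have "rcv q \<tau> \<subseteq> {..<2*q}" using rc C opp_lt by auto
    ultimately show ?thesis by blast
  qed
qed

lemma cover: "k < 2*q \<Longrightarrow> p \<in> PP q \<Longrightarrow> \<not> cch q k p \<Longrightarrow>
   \<exists>s<2*q. s \<noteq> k \<and> (\<exists>\<tau>\<in>Tx q s. k \<in> rcv q \<tau> \<and> pc q \<tau> k = p \<and> (\<forall>v\<in>rcv q \<tau> - {k}. cch q k (pc q \<tau> v)))"
proof -
  assume k: "k < 2*q" and pP: "p \<in> PP q" and nc: "\<not> cch q k p"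
  obtain m I j where p: "p = ((m,I),j)" and m: "m < 2*q" and I: "I \<subseteq> {..<q}" "card I = 2"
    and j: "j \<in> Tset q (m,I)" using pP unfolding PP_def S2_def by auto
  have IS2: "I \<in> S2 q" using I unfolding S2_def by auto
  have finI: "finite I" using I by (auto intro: finite_subset)
  have kT: "k \<notin> Tset q (m,I)" using nc p unfolding cch_def by simp
  show ?thesis
  proof (cases "k < q \<longleftrightarrow> m < q")
    case True
    note side = True
    have km: "k \<noteq> m" using kT by auto
    have ne: "idx q m \<noteq> idx q k" using idx_inj[OF m k] side km by metis
    show ?thesis
    proof (cases "j = m")
      case True
      define \<tau> where "\<tau> = (m, 0::nat, k, I)"
      have tin: "\<tau> \<in> Tx q m" unfolding \<tau>_def Tx_def TI_def Same_def using k side km IS2 by auto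
      have rc: "rcv q \<tau> = insert k (opp q m ` I)" unfolding \<tau>_def by simp
      have others: "cch q k (pc q \<tau> v)" if v: "v \<in> rcv q \<tau> - {k}" for v
      proof -
        obtain i where i: "i \<in> I" "v = opp q m i" using v rc by auto
        have iq: "i < q" using i I by auto
        obtain i' where i': "I = {i, i'}" "i \<noteq> i'" using card2E[OF I(2) i(1)] by auto
        have i'q: "i' < q" using i' I by auto
        have "pc q \<tau> v = ((opp q m i', {idx q m, idx q k}), m)"
          using v i i' iq unfolding \<tau>_def by auto
        moreover have "opp q (opp q m i') (idx q k) = k"
          by (rule opp_idx) (use k side side_opp[OF i'q] in auto)
        ultimately show ?thesis unfolding cch_def by force
      qed
      show ?thesis
        apply (rule exI[of _ m], intro conjI)
        using m km apply auto[2]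
        apply (rule bexI[of _ \<tau>])
        using rc others tin True p unfolding \<tau>_def by auto
    next
      case False
      then obtain i where i: "i \<in> I" "j = opp q m i" using j by auto
      have iq: "i < q" using i I by auto
      obtain i' where i': "I = {i, i'}" "i \<noteq> i'" using card2E[OF I(2) i(1)] by auto
      have i'q: "i' < q" using i' I by auto
      define a where "a = opp q m i'"
      define \<tau> where "\<tau> = (j, 0::nat, a, {idx q m, idx q k})"
      have jq: "j < 2*q" using i opp_lt iq by auto
      have jside: "j < q \<longleftrightarrow> \<not> m < q" using i side_opp iq by auto
      have aside: "a < q \<longleftrightarrow> \<not> m < q" using a_def side_opp i'q by auto
      have aj: "a \<noteq> j" using i i' a_def opp_inj by metis
      have S2mk: "{idx q m, idx q k} \<in> S2 q" using ne idx_lt unfolding S2_def by auto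
      have tin: "\<tau> \<in> Tx q j" unfolding \<tau>_def Tx_def TI_def Same_def
        using aj jside aside opp_lt[OF i'q] a_def S2mk by auto
      have oj_m: "opp q j (idx q m) = m" by (rule opp_idx) (use m jside in auto)
      have oj_k: "opp q j (idx q k) = k" by (rule opp_idx) (use k side jside in auto)
      have rc: "rcv q \<tau> = {a, m, k}" unfolding \<tau>_def using oj_m oj_k by auto
      have ka: "k \<noteq> a" using aside side by auto
      have idxj: "idx q j = i" using i iq by simp
      have idxa: "idx q a = i'" using a_def i'q by simp
      have dm: "{idx q m, idx q k} - {idx q k} = {idx q m}" using ne by auto
      have pck: "pc q \<tau> k = p"
        using dm ka ne oj_m idxj idxa i' p unfolding \<tau>_def by auto
      have others: "cch q k (pc q \<tau> v)" if v: "v \<in> rcv q \<tau> - {k}" for v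
      proof -
        have "v = a \<or> v = m" using v rc by auto
        then show ?thesis
        proof
          assume va: "v = a"
          then have "pc q \<tau> v = ((j, {idx q m, idx q k}), j)" unfolding \<tau>_def by simp
          then show ?thesis using oj_k unfolding cch_def by force
        next
          assume vm: "v = m"
          have ma: "m \<noteq> a" using aside by auto
          have "pc q \<tau> v = ((opp q j (idx q k), {idx q j, idx q a}), j)"
            unfolding \<tau>_def using vm ma ne by (auto simp: insert_Diff_if)
          then show ?thesis using oj_k unfolding cch_def by force
        qed
      qed
      have jk: "j \<noteq> k" using jside side by auto
      show ?thesis
        apply (rule exI[of _ j], intro conjI)
        using jq jk apply auto[2]
        apply (rule bexI[of _ \<tau>])
        using rc others tin pck by auto
    qed
  next
    case False
    note side = False
    have ki: "idx q k \<notin> I"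
    proof
      assume "idx q k \<in> I"
      moreover have "opp q m (idx q k) = k" by (rule opp_idx) (use k side in auto)
      ultimately show False using kT by force
    qed
    define C where "C = insert (idx q k) I"
    define c where "c = (if j = m then idx q k else idx q j)"
    define \<tau> where "\<tau> = (m, 1::nat, c, C)"
    have CS3: "C \<in> S3 q" unfolding C_def S3_def using ki I finI idx_lt by auto
    have cC: "c \<in> C" unfolding c_def C_def using j I by (auto simp: subset_eq)
    have tin: "\<tau> \<in> Tx q m" unfolding \<tau>_def Tx_def TII_def using CS3 cC by auto
    have okm: "opp q m (idx q k) = k" by (rule opp_idx) (use k side in auto)
    have rc: "rcv q \<tau> = opp q m ` C" unfolding \<tau>_def by simp
    have kr: "k \<in> rcv q \<tau>" using rc okm unfolding C_def by force
    have CI: "C - {idx q k} = I" unfolding C_def using ki by auto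
    have pck: "pc q \<tau> k = p"
    proof (cases "j = m")
      case True then show ?thesis unfolding \<tau>_def c_def using CI p by simp
    next
      case False
      then obtain i where i: "i \<in> I" "j = opp q m i" using j by auto
      have iq: "i < q" using i I by auto
      have "c = i" unfolding c_def using False i iq by simp
      moreover have "i \<noteq> idx q k" using i ki by auto
      ultimately show ?thesis unfolding \<tau>_def using CI p i by simp
    qed
    have others: "cch q k (pc q \<tau> v)" if v: "v \<in> rcv q \<tau> - {k}" for v
    proof -
      obtain c0 where c0: "c0 \<in> C" "v = opp q m c0" using v rc by auto
      have c0q: "c0 < q" using c0 I idx_lt unfolding C_def by auto
      have "c0 \<noteq> idx q k" using c0 okm v by auto
      moreover have "fst (pc q \<tau> v) = (m, C - {c0})" unfolding \<tau>_def using c0 c0q by simp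
      ultimately show ?thesis unfolding cch_def using okm C_def by force
    qed
    have mk: "m \<noteq> k" using side by auto
    show ?thesis
      apply (rule exI[of _ m], intro conjI)
      using m mk apply auto[2]
      apply (rule bexI[of _ \<tau>])
      using kr others tin pck by auto
  qed
qed

lemma finS2: "finite (S2 q)" unfolding S2_def by (rule finite_subset[of _ "Pow {..<q}"]) auto
lemma finS3: "finite (S3 q)" unfolding S3_def by (rule finite_subset[of _ "Pow {..<q}"]) auto
lemma cardS2: "card (S2 q) = q choose 2" unfolding S2_def using n_subsets[of "{..<q}" 2] by simp
lemma cardS3: "card (S3 q) = q choose 3" unfolding S3_def using n_subsets[of "{..<q}" 3] by simp

lemma card_Tset: "I \<in> S2 q \<Longrightarrow> card (Tset q (m, I)) = 3"
proof -
  assume I: "I \<in> S2 q"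
  have fin: "finite I" using I finite_subset unfolding S2_def by blast
  have "m \<notin> opp q m ` I"
  proof
    assume "m \<in> opp q m ` I"
    then obtain x where "x \<in> I" "m = opp q m x" by auto
    then show False using I side_opp[of x m] unfolding S2_def by auto
  qed
  moreover have "card (opp q m ` I) = 2"
    using I by (subst card_image) (auto simp: S2_def inj_on_def dest: opp_inj)
  ultimately show ?thesis using fin by simp
qed

lemma finS2el: "I \<in> S2 q \<Longrightarrow> finite I" unfolding S2_def using finite_subset by blast
lemma finS3el: "I \<in> S3 q \<Longrightarrow> finite I" unfolding S3_def using finite_subset by blast
lemma finTset: "\<forall>T\<in>A \<times> S2 q. finite (Tset q T)" using finS2el by auto
lemma card_Tset': "I \<in> S2 q \<Longrightarrow> card (insert m (opp q m ` I)) = 3" using card_Tset by simp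

lemma finPP: "finite (PP q)" unfolding PP_def using finS2 finS2el by (intro finite_SigmaI) auto

lemma cardPP: "card (PP q) = 3 * (2*q * (q choose 2))"
proof -
  have "card (PP q) = (\<Sum>T\<in>{..<2*q} \<times> S2 q. card (Tset q T))"
    unfolding PP_def by (rule card_SigmaI) (use finS2 finS2el in auto)
  also have "\<dots> = (\<Sum>T\<in>{..<2*q} \<times> S2 q. 3)" by (rule sum.cong) (auto simp: card_Tset')
  also have "\<dots> = 3 * (2*q * (q choose 2))" by (simp add: card_cartesian_product cardS2)
  finally show ?thesis .
qed

lemma card_side: "card {u. u < 2*q \<and> (u < q \<longleftrightarrow> P)} = q"
proof (cases P)
  case True
  then have "{u. u < 2*q \<and> (u < q \<longleftrightarrow> P)} = {..<q}" by auto
  then show ?thesis by simp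
next
  case False
  then have "{u. u < 2*q \<and> (u < q \<longleftrightarrow> P)} = {q..<2*q}" by auto
  then show ?thesis by simp
qed

lemma mem_count: "k < 2*q \<Longrightarrow> card {p \<in> PP q. cch q k p} \<le> 3 * ((q choose 2) + q * (q - 1))"
proof -
  assume k: "k < 2*q"
  define Tk where "Tk = {T \<in> {..<2*q} \<times> S2 q. k \<in> Tset q T}"
  define Op where "Op = {m. m < 2*q \<and> (m < q \<longleftrightarrow> \<not> k < q)}"
  have eq: "{p \<in> PP q. cch q k p} = Sigma Tk (Tset q)" unfolding PP_def Tk_def cch_def by auto
  have finTk: "finite Tk" unfolding Tk_def using finS2 by auto
  have "card {p \<in> PP q. cch q k p} = (\<Sum>T\<in>Tk. card (Tset q T))"
    unfolding eq by (rule card_SigmaI) (use finTk finS2el in \<open>auto simp: Tk_def\<close>)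
  also have "\<dots> = (\<Sum>T\<in>Tk. 3)" by (rule sum.cong) (auto simp: Tk_def card_Tset')
  also have "\<dots> = 3 * card Tk" by simp
  finally have c1: "card {p \<in> PP q. cch q k p} = 3 * card Tk" .
  have sub: "Tk \<subseteq> ({k} \<times> S2 q) \<union> (\<lambda>(m,i). (m, {idx q k, i})) ` (Op \<times> ({..<q} - {idx q k}))"
  proof
    fix T assume T: "T \<in> Tk"
    obtain m I where TmI: "T = (m, I)" by (cases T)
    have m: "m < 2*q" and I: "I \<in> S2 q" and kin: "k \<in> Tset q (m, I)" using T TmI unfolding Tk_def by auto
    show "T \<in> ({k} \<times> S2 q) \<union> (\<lambda>(m,i). (m, {idx q k, i})) ` (Op \<times> ({..<q} - {idx q k}))"
    proof (cases "k = m")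
      case True then show ?thesis using TmI I by auto
    next
      case False
      then obtain i where i: "i \<in> I" "k = opp q m i" using kin by auto
      have iq: "i < q" using i I S2_sub by auto
      obtain i' where i': "I = {i, i'}" "i \<noteq> i'" using card2E[of I i] I i unfolding S2_def by auto
      have i'q: "i' < q" using i' I S2_sub by auto
      have "m \<in> Op" unfolding Op_def using m i side_opp[OF iq, of m] by auto
      moreover have "idx q k = i" using i iq by simp
      ultimately show ?thesis using TmI i' i'q by (auto simp: image_iff)
    qed
  qed
  have "card Tk \<le> card (({k} \<times> S2 q) \<union> (\<lambda>(m,i). (m, {idx q k, i})) ` (Op \<times> ({..<q} - {idx q k})))"
    by (rule card_mono[OF _ sub]) (use finS2 Op_def in auto)
  also have "\<dots> \<le> card ({k} \<times> S2 q) + card ((\<lambda>(m,i). (m, {idx q k, i})) ` (Op \<times> ({..<q} - {idx q k})))"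
    by (rule card_Un_le)
  also have "\<dots> \<le> (q choose 2) + card (Op \<times> ({..<q} - {idx q k}))"
    using card_image_le[of "Op \<times> ({..<q} - {idx q k})" "(\<lambda>(m,i). (m, {idx q k, i}))"]
    by (simp add: card_cartesian_product cardS2 Op_def)
  also have "card (Op \<times> ({..<q} - {idx q k})) = q * (q - 1)"
    using card_side[of "\<not> k < q"] idx_lt by (simp add: card_cartesian_product Op_def)
  finally show ?thesis using c1 by simp
qed

lemma finTx: "finite (Tx q s)"
proof -
  have "finite (Sigma (S3 q) (\<lambda>C. C))" using finS3 finS3el by (intro finite_SigmaI) auto
  moreover have "finite ((Same q s - {s}) \<times> S2 q)" using finS2 unfolding Same_def by auto
  ultimately show ?thesis unfolding Tx_def TI_def TII_def by auto
qed

lemma cardTx: "s < 2*q \<Longrightarrow> card (Tx q s) = (q - 1) * (q choose 2) + 3 * (q choose 3)"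
proof -
  assume s: "s < 2*q"
  have d: "TI q s \<inter> TII q s = {}" unfolding TI_def TII_def by auto
  have f1: "finite (TI q s)" and f2: "finite (TII q s)" using finTx[of s] unfolding Tx_def by auto
  have "card (TI q s) = card ((Same q s - {s}) \<times> S2 q)"
    unfolding TI_def by (rule card_image) (auto simp: inj_on_def)
  also have "\<dots> = (q - 1) * (q choose 2)"
    using card_side[of "s < q"] s by (simp add: card_cartesian_product cardS2 Same_def)
  finally have c1: "card (TI q s) = (q - 1) * (q choose 2)" .
  have "card (TII q s) = card (Sigma (S3 q) (\<lambda>C. C))"
    unfolding TII_def by (rule card_image) (auto simp: inj_on_def)
  also have "\<dots> = (\<Sum>C\<in>S3 q. card C)"
    by (rule card_SigmaI) (use finS3 in \<open>auto simp: S3_def intro: finite_subset\<close>)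
  also have "\<dots> = (\<Sum>C\<in>S3 q. 3)" by (rule sum.cong) (auto simp: S3_def)
  finally have c2: "card (TII q s) = 3 * (q choose 3)" by (simp add: cardS3)
  show ?thesis unfolding Tx_def using card_Un_disjoint[OF f1 f2 d] c1 c2 by simp
qed

end


lemma choose2_real: "real (n choose 2) = real n * (real n - 1) / 2"
  by (induction n) (auto simp: numeral_2_eq_2 field_simps)

lemma choose3_real: "real (n choose 3) = real n * (real n - 1) * (real n - 2) / 6"
proof (induction n)
  case 0 then show ?case by simp
next
  case (Suc n)
  have "Suc n choose 3 = (n choose 2) + (n choose 3)"
    by (simp add: numeral_3_eq_3 numeral_2_eq_2)
  then show ?case using Suc choose2_real[of n] by (simp add: field_simps)
qed

theorem mainTheorem9:
  fixes N K q :: nat and M :: real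
  assumes "N \<ge> 1" and "K \<ge> 2" and "0 < M" and "M \<le> real N"
    and "K = 2 * q" and "q \<ge> 4"
    and "real K * M / real N = 3"
  shows "\<exists>F::nat. real F = 3 * real K ^ 2 * (real K - 2) / 8
           \<and> d2d_achievable N K M F (real N / M - 1)
           \<and> real F / real (F_JCM K 3) = 3 / 4 * (real K / (real K - 1))"
proof -
  have q2: "q \<ge> 2" using assms by simp
  have Npos: "real N > 0" using assms by simp
  have Mdef: "M = 3 * real N / (2 * real q)" using assms(5,6,7) Npos by (simp add: field_simps)
  define F where "F = card (PP q)"
  have Fr: "real F = 3 * real q ^ 2 * (real q - 1)"
  proof -
    have "real F = 3 * (2 * real q * real (q choose 2))" unfolding F_def cardPP[OF q2] by simp
    also have "\<dots> = 3 * real q ^ 2 * (real q - 1)" unfolding choose2_real by (simp add: field_simps power2_eq_square)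
    finally show ?thesis .
  qed
  have q1: "real q \<ge> 4" using assms by simp
  have Fpos: "F > 0"
  proof -
    have "real F > 0" using Fr q1 by simp
    then show ?thesis by simp
  qed
  have F1: "real F = 3 * real K ^ 2 * (real K - 2) / 8"
    using Fr assms(5) by (simp add: field_simps power2_eq_square)
  have JCM: "real (F_JCM K 3) = real K * (real K - 1) * (real K - 2) / 2"
    unfolding F_JCM_def using choose3_real[of K] by (simp add: field_simps)
  have F3: "real F / real (F_JCM K 3) = 3 / 4 * (real K / (real K - 1))"
  proof -
    have Kq: "real K = 2 * real q" using assms(5) by simp
    have d: "real (F_JCM K 3) = 2 * real q * (2 * real q - 1) * (real q - 1)" unfolding JCM Kq by (simp add: field_simps)
    have n1: "2 * real q - 1 \<noteq> 0" "real q - 1 \<noteq> 0" "real q \<noteq> 0" "2 * real q - 1 > 0" using q1 by auto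
    show ?thesis unfolding d Fr Kq using n1 by (simp add: divide_simps power2_eq_square)
  qed
  have sch: "d2d_scheme N K M F b (real N / M - 1)" for b
  proof (rule abstract_scheme[where P = "PP q" and cache = "cch q" and Tx = "Tx q" and rcv = "rcv q" and pc = "pc q"])
    show "finite (PP q)" by (rule finPP[OF q2])
    show "card (PP q) = F" by (simp add: F_def)
    show "N \<ge> 1" by (rule assms(1))
    show "\<forall>s<K. finite (Tx q s)" using finTx[OF q2] by auto
    show "\<forall>s<K. \<forall>\<tau>\<in>Tx q s. finite (rcv q \<tau>) \<and> rcv q \<tau> \<subseteq> {..<K} \<and>
                   (\<forall>v\<in>rcv q \<tau>. pc q \<tau> v \<in> PP q \<and> cch q s (pc q \<tau> v))"
      using tx_ok[OF q2] assms(5) by auto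
    show "\<forall>k<K. \<forall>p\<in>PP q. \<not> cch q k p \<longrightarrow> (\<exists>s<K. s \<noteq> k \<and> (\<exists>\<tau>\<in>Tx q s. k \<in> rcv q \<tau> \<and>
                   pc q \<tau> k = p \<and> (\<forall>v\<in>rcv q \<tau> - {k}. cch q k (pc q \<tau> v))))"
      using cover[OF q2] assms(5) by auto
    show "\<forall>k<K. real N * real (card {p\<in>PP q. cch q k p}) \<le> M * real F"
    proof (intro allI impI)
      fix k assume k: "k < K"
      have c: "real (card {p\<in>PP q. cch q k p}) \<le> 3 * (real (q choose 2) + real q * (real q - 1))"
        using mem_count[OF q2, of k] k assms(5) q2
        by (metis (mono_tags, lifting) of_nat_1 of_nat_add of_nat_diff of_nat_le_iff of_nat_mult of_nat_numeral le_trans one_le_numeral)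
      have "real N * real (card {p\<in>PP q. cch q k p}) \<le> real N * (3 * (real (q choose 2) + real q * (real q - 1)))"
        using c Npos by (intro mult_left_mono) auto
      also have "\<dots> = M * real F" unfolding Mdef Fr choose2_real using q1 by (simp add: field_simps power2_eq_square)
      finally show "real N * real (card {p\<in>PP q. cch q k p}) \<le> M * real F" .
    qed
    show "real (\<Sum>s<K. card (Tx q s)) = (real N / M - 1) * real F"
    proof -
      have "(\<Sum>s<K. card (Tx q s)) = (\<Sum>s<K. (q - 1) * (q choose 2) + 3 * (q choose 3))"
        by (rule sum.cong) (use cardTx[OF q2] assms(5) in auto)
      then have "real (\<Sum>s<K. card (Tx q s)) = real K * ((real q - 1) * real (q choose 2) + 3 * real (q choose 3))"
        using q2 by (simp add: of_nat_diff)
      also have "\<dots> = (real N / M - 1) * real F"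
        unfolding Mdef Fr choose2_real choose3_real using q1 Npos assms(5) by (simp add: field_simps power2_eq_square)
      finally show ?thesis .
    qed
    show "F > 0" by (rule Fpos)
  qed
  show ?thesis
    using F1 F3 sch Fpos unfolding d2d_achievable_def by (intro exI[of _ F]) auto
qed


end
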